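(* Let $X$ be a metric space, $\Omega\subset X$ non-empty, $E$ a non-trivial locally convex Hausdorff space over $\mathbb{K}$ and $\mathcal{FV}(\Omega)$ a dom-space such that $\mathcal{FV}(\Omega)\subset\mathcal{C}^{ext}(\Omega)$ as a linear subspace. If the map $\delta\colon\Omega\to\mathcal{FV}(\Omega)'_\kappa$, $x\mapsto\delta_x$, belongs to $\mathcal{C}^{ext}(\Omega,\mathcal{FV}(\Omega)'_\kappa)$, then $S(u)\in\mathcal{C}^{ext}(\Omega,E)$ for all $u\in\mathcal{FV}(\Omega)\varepsilon E$.
   Context: $\mathbb{K}\in\{\mathbb{R},\mathbb{C}\}$. For a topological vector space $Z$, $\mathcal{C}^{ext}(\Omega,Z)$ is the space of continuous $f\colon\Omega\to Z$ having a continuous extension to the closure $\overline{\Omega}$ of $\Omega$ in $X$; $\mathcal{C}^{ext}(\Omega):=\mathcal{C}^{ext}(\Omega,\mathbb{K})$. Framework: $J,M$ non-empty index sets, $(\omega_m)_{m\in M}$ non-empty sets, $\nu_{j,m}\colon\omega_m\to[0,\infty)$ such that for all $m$, $x\in\omega_m$ some $\nu_{j,m}(x)>0$; $\operatorname{AP}(\Omega)\subset\mathbb{K}^\Omega$ a linear subspace; $T_m\colon\operatorname{dom}T_m\to\mathbb{K}^{\omega_m}$ linear maps on linear subspaces of $\mathbb{K}^\Omega$; $\mathcal{FV}(\Omega):=\{f\in\operatorname{AP}(\Omega)\cap\bigcap_m\operatorname{dom}T_m: |f|_{j,m}:=\sup_{x\in\omega_m}|T_m(f)(x)|\nu_{j,m}(x)<\infty\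 \forall j,m\}$ with these seminorms. It is a dom-space if it is Hausdorff, the seminorms are directed and every $\delta_x\colon f\mapsto f(x)$ belongs to $\mathcal{FV}(\Omega)'$. $\mathcal{FV}(\Omega)'_\kappa$: dual with the topology of uniform convergence on absolutely convex compact subsets of $\mathcal{FV}(\Omega)$. $\mathcal{FV}(\Omega)\varepsilon E$: continuous linear maps $\mathcal{FV}(\Omega)'_\kappa\to E$ with the topology of uniform convergence on equicontinuous sets; $S(u)(x):=u(\delta_x)$. *)

theory Defs
  imports "HOL-Analysis.Analysis" "HOL-Library.Function_Algebras"
begin

text \<open>Scalar field: a type 'k of class real_normed_field (covers K = R and K = C).
  Elements of K^Omega are represented by functions 'x => 'k vanishing outside Omega.\<close>

definition ext_fun :: "'x set \<Rightarrow> ('x \<Rightarrow> 'k::zero) set" where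
  "ext_fun \<Omega> = {f. \<forall>x. x \<notin> \<Omega> \<longrightarrow> f x = 0}"

definition lc :: "'k::real_normed_field \<Rightarrow> ('x \<Rightarrow> 'k) \<Rightarrow> 'k \<Rightarrow> ('x \<Rightarrow> 'k) \<Rightarrow> ('x \<Rightarrow> 'k)" where
  "lc a f b g = (\<lambda>x. a * f x + b * g x)"

definition lin_subspace :: "('x \<Rightarrow> 'k::real_normed_field) set \<Rightarrow> bool" where
  "lin_subspace V \<longleftrightarrow> (\<lambda>_. 0) \<in> V \<and> (\<forall>f\<in>V. \<forall>g\<in>V. \<forall>a b. lc a f b g \<in> V)"

definition lin_on :: "('x \<Rightarrow> 'k::real_normed_field) set \<Rightarrow> (('x \<Rightarrow> 'k) \<Rightarrow> ('w \<Rightarrow> 'k)) \<Rightarrow> bool" where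
  "lin_on V T \<longleftrightarrow> (\<forall>f\<in>V. \<forall>g\<in>V. \<forall>a b. T (lc a f b g) = lc a (T f) b (T g))"

definition FV_space ::
  "('x \<Rightarrow> 'k::real_normed_field) set \<Rightarrow> ('m \<Rightarrow> ('x \<Rightarrow> 'k) set) \<Rightarrow> ('m \<Rightarrow> 'w set)
   \<Rightarrow> ('j \<Rightarrow> 'm \<Rightarrow> 'w \<Rightarrow> real) \<Rightarrow> ('m \<Rightarrow> ('x \<Rightarrow> 'k) \<Rightarrow> ('w \<Rightarrow> 'k)) \<Rightarrow> ('x \<Rightarrow> 'k) set" where
  "FV_space AP domT \<omega> \<nu> T =
     {f \<in> AP \<inter> (\<Inter>m. domT m). \<forall>j m. bdd_above ((\<lambda>w. norm (T m f w) * \<nu> j m w) ` \<omega> m)}"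

definition FV_sn ::
  "('m \<Rightarrow> 'w set) \<Rightarrow> ('j \<Rightarrow> 'm \<Rightarrow> 'w \<Rightarrow> real) \<Rightarrow> ('m \<Rightarrow> ('x \<Rightarrow> 'k::real_normed_field) \<Rightarrow> ('w \<Rightarrow> 'k))
   \<Rightarrow> 'j \<times> 'm \<Rightarrow> ('x \<Rightarrow> 'k) \<Rightarrow> real" where
  "FV_sn \<omega> \<nu> T = (\<lambda>(j, m) f. SUP w\<in>\<omega> m. norm (T m f w) * \<nu> j m w)"

text \<open>Continuity of a linear map u : (V, (p_i)_{i in I}) -> (q_l)_{l in L} between spaces
  whose locally convex topologies are generated by seminorm families.\<close>
definition sn_bounded ::
  "'i set \<Rightarrow> ('i \<Rightarrow> 'a \<Rightarrow> real) \<Rightarrow> 'a set \<Rightarrow> 'l set \<Rightarrow> ('l \<Rightarrow> 'b \<Rightarrow> real) \<Rightarrow> ('a \<Rightarrow> 'b) \<Rightarrow> bool" where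
  "sn_bounded I p V L q u \<longleftrightarrow>
     (\<forall>l\<in>L. \<exists>F C. finite F \<and> F \<subseteq> I \<and> (\<forall>v\<in>V. q l (u v) \<le> C * (\<Sum>i\<in>F. p i v)))"

definition sn_topology :: "'i set \<Rightarrow> ('i \<Rightarrow> 'a::ab_group_add \<Rightarrow> real) \<Rightarrow> 'a set \<Rightarrow> 'a topology" where
  "sn_topology I p V = topology (\<lambda>U. U \<subseteq> V \<and>
     (\<forall>f\<in>U. \<exists>F e. finite F \<and> F \<subseteq> I \<and> e > 0 \<and> {g \<in> V. \<forall>i\<in>F. p i (g - f) < e} \<subseteq> U))"

definition dual_space :: "('i \<Rightarrow> ('x \<Rightarrow> 'k::real_normed_field) \<Rightarrow> real) \<Rightarrow> ('x \<Rightarrow> 'k) set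
   \<Rightarrow> (('x \<Rightarrow> 'k) \<Rightarrow> 'k) set" where
  "dual_space p V = {y. (\<forall>f\<in>V. \<forall>g\<in>V. \<forall>a b. y (lc a f b g) = a * y f + b * y g)
      \<and> sn_bounded UNIV p V (UNIV :: unit set) (\<lambda>_. norm) y
      \<and> (\<forall>f. f \<notin> V \<longrightarrow> y f = 0)}"

definition delta :: "('x \<Rightarrow> 'k::zero) set \<Rightarrow> 'x \<Rightarrow> (('x \<Rightarrow> 'k) \<Rightarrow> 'k)" where
  "delta V x = (\<lambda>f. if f \<in> V then f x else 0)"

definition abs_convex :: "('x \<Rightarrow> 'k::real_normed_field) set \<Rightarrow> bool" where
  "abs_convex K \<longleftrightarrow> (\<forall>f\<in>K. \<forall>g\<in>K. \<forall>a b. norm a + norm b \<le> 1 \<longrightarrow> lc a f b g \<in> K)"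

text \<open>index set of the seminorms of V'_kappa: absolutely convex compact subsets of V\<close>
definition kappa_sets :: "('i \<Rightarrow> ('x \<Rightarrow> 'k::real_normed_field) \<Rightarrow> real) \<Rightarrow> ('x \<Rightarrow> 'k) set
   \<Rightarrow> ('x \<Rightarrow> 'k) set set" where
  "kappa_sets p V = {K. K \<subseteq> V \<and> abs_convex K \<and> compactin (sn_topology UNIV p V) K}"

definition kappa_sn :: "('x \<Rightarrow> 'k::real_normed_field) set \<Rightarrow> (('x \<Rightarrow> 'k) \<Rightarrow> 'k) \<Rightarrow> real" where
  "kappa_sn K y = Sup (insert 0 ((\<lambda>f. norm (y f)) ` K))"

text \<open>epsilon product V eps E: continuous linear maps V'_kappa -> E\<close>
definition eps_prod :: "('i \<Rightarrow> ('x \<Rightarrow> 'k::real_normed_field) \<Rightarrow> real) \<Rightarrow> ('x \<Rightarrow> 'k) set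
   \<Rightarrow> ('k \<Rightarrow> 'e \<Rightarrow> 'e) \<Rightarrow> ('l \<Rightarrow> 'e::ab_group_add \<Rightarrow> real) \<Rightarrow> ((('x \<Rightarrow> 'k) \<Rightarrow> 'k) \<Rightarrow> 'e) set" where
  "eps_prod p V sc q = {u.
     (\<forall>y\<in>dual_space p V. \<forall>z\<in>dual_space p V. \<forall>a b.
         u (\<lambda>f. a * y f + b * z f) = sc a (u y) + sc b (u z))
     \<and> sn_bounded (kappa_sets p V) kappa_sn (dual_space p V) UNIV q u}"

definition Cext :: "'x::metric_space set \<Rightarrow> 'l set \<Rightarrow> ('l \<Rightarrow> 'z::ab_group_add \<Rightarrow> real) \<Rightarrow> 'z set
   \<Rightarrow> ('x \<Rightarrow> 'z) set" where
  "Cext \<Omega> L q Z = {f. (\<forall>x\<in>\<Omega>. f x \<in> Z) \<and>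
     (\<exists>g. (\<forall>x\<in>closure \<Omega>. g x \<in> Z) \<and> (\<forall>x\<in>\<Omega>. g x = f x) \<and>
        (\<forall>z\<in>closure \<Omega>. \<forall>l\<in>L. ((\<lambda>x. q l (g x - g z)) \<longlongrightarrow> 0) (at z within closure \<Omega>)))}"

definition seminorm_on :: "('k::real_normed_field \<Rightarrow> 'e::ab_group_add \<Rightarrow> 'e) \<Rightarrow> ('e \<Rightarrow> real) \<Rightarrow> bool" where
  "seminorm_on sc s \<longleftrightarrow> (\<forall>x. 0 \<le> s x) \<and> (\<forall>x y. s (x + y) \<le> s x + s y)
     \<and> (\<forall>a x. s (sc a x) = norm a * s x)"

end

theory Submission
  imports Defs
begin


lemma FV_sn_nonneg:
  assumes "\<forall>m. \<omega> m \<noteq> {}" "\<forall>j m w. 0 \<le> \<nu> j m w" "f \<in> FV_space AP domT \<omega> \<nu> T"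
  shows "0 \<le> FV_sn \<omega> \<nu> T i f"
proof (cases i)
  case (Pair j m)
  obtain w where w: "w \<in> \<omega> m" using assms(1) by blast
  have bdd: "bdd_above ((\<lambda>w. norm (T m f w) * \<nu> j m w) ` \<omega> m)"
    using assms(3) unfolding FV_space_def by auto
  have "0 \<le> norm (T m f w) * \<nu> j m w" using assms(2) by simp
  also have "\<dots> \<le> (SUP w\<in>\<omega> m. norm (T m f w) * \<nu> j m w)"
    by (rule cSUP_upper[OF w bdd])
  finally show ?thesis using Pair by (simp add: FV_sn_def)
qed

lemma dual_diff:
  assumes nn: "\<forall>i. \<forall>v\<in>V. 0 \<le> p i v"
    and y: "y \<in> dual_space p V" and z: "z \<in> dual_space p V"
  shows "y - z \<in> dual_space p V"
proof -
  have ylin: "\<forall>f\<in>V. \<forall>g\<in>V. \<forall>a b. y (lc a f b g) = a * y f + b * y g"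
    and zlin: "\<forall>f\<in>V. \<forall>g\<in>V. \<forall>a b. z (lc a f b g) = a * z f + b * z g"
    and y0: "\<forall>f. f \<notin> V \<longrightarrow> y f = 0" and z0: "\<forall>f. f \<notin> V \<longrightarrow> z f = 0"
    using y z unfolding dual_space_def by auto
  obtain F1 C1 where F1: "finite F1" "\<forall>v\<in>V. norm (y v) \<le> C1 * (\<Sum>i\<in>F1. p i v)"
    using y unfolding dual_space_def sn_bounded_def by auto
  obtain F2 C2 where F2: "finite F2" "\<forall>v\<in>V. norm (z v) \<le> C2 * (\<Sum>i\<in>F2. p i v)"
    using z unfolding dual_space_def sn_bounded_def by auto
  have bd: "norm ((y - z) v) \<le> (\<bar>C1\<bar> + \<bar>C2\<bar>) * (\<Sum>i\<in>F1 \<union> F2. p i v)" if v: "v \<in> V" for v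
  proof -
    have s1: "(\<Sum>i\<in>F1. p i v) \<le> (\<Sum>i\<in>F1 \<union> F2. p i v)"
      by (rule sum_mono2) (use F1 F2 nn v in auto)
    have s2: "(\<Sum>i\<in>F2. p i v) \<le> (\<Sum>i\<in>F1 \<union> F2. p i v)"
      by (rule sum_mono2) (use F1 F2 nn v in auto)
    have n1: "0 \<le> (\<Sum>i\<in>F1. p i v)" "0 \<le> (\<Sum>i\<in>F2. p i v)"
      by (intro sum_nonneg, use nn v in auto)+
    have "C1 * (\<Sum>i\<in>F1. p i v) \<le> \<bar>C1\<bar> * (\<Sum>i\<in>F1 \<union> F2. p i v)"
      by (rule order_trans[OF mult_right_mono[OF abs_ge_self n1(1)] mult_left_mono[OF s1 abs_ge_zero]])
    moreover have "C2 * (\<Sum>i\<in>F2. p i v) \<le> \<bar>C2\<bar> * (\<Sum>i\<in>F1 \<union> F2. p i v)"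
      by (rule order_trans[OF mult_right_mono[OF abs_ge_self n1(2)] mult_left_mono[OF s2 abs_ge_zero]])
    moreover have "norm ((y - z) v) \<le> norm (y v) + norm (z v)"
      by (simp add: norm_triangle_ineq4)
    moreover have "norm (y v) \<le> C1 * (\<Sum>i\<in>F1. p i v)" using F1(2) v by blast
    moreover have "norm (z v) \<le> C2 * (\<Sum>i\<in>F2. p i v)" using F2(2) v by blast
    ultimately show ?thesis by (simp add: distrib_right)
  qed
  show ?thesis unfolding dual_space_def sn_bounded_def
  proof (intro CollectI conjI ballI allI impI)
    fix f g a b assume "f \<in> V" "g \<in> V"
    then show "(y - z) (lc a f b g) = a * (y - z) f + b * (y - z) g"
      using ylin zlin by (simp add: algebra_simps)
  next
    fix f assume "f \<notin> V" then show "(y - z) f = 0" using y0 z0 by simp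
  next
    fix l :: unit
    show "\<exists>F C. finite F \<and> F \<subseteq> UNIV \<and> (\<forall>v\<in>V. norm ((y - z) v) \<le> C * (\<Sum>i\<in>F. p i v))"
      using bd F1(1) F2(1) by blast
  qed
qed

theorem proposition4p8:
  fixes \<Omega> :: "'x::metric_space set"
    and AP :: "('x \<Rightarrow> 'k::real_normed_field) set"
    and domT :: "'m \<Rightarrow> ('x \<Rightarrow> 'k) set"
    and T :: "'m \<Rightarrow> ('x \<Rightarrow> 'k) \<Rightarrow> ('w \<Rightarrow> 'k)"
    and \<omega> :: "'m \<Rightarrow> 'w set"
    and \<nu> :: "'j \<Rightarrow> 'm \<Rightarrow> 'w \<Rightarrow> real"
    and sc :: "'k \<Rightarrow> 'e::ab_group_add \<Rightarrow> 'e"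
    and q :: "'l \<Rightarrow> 'e \<Rightarrow> real"
  assumes Omega_ne: "\<Omega> \<noteq> {}"
    \<comment> \<open>E: non-trivial locally convex Hausdorff space, topology given by seminorms q\<close>
    and E_vs: "vector_space sc"
    and E_sn: "\<forall>l. seminorm_on sc (q l)"
    and E_hausdorff: "\<forall>x. x \<noteq> 0 \<longrightarrow> (\<exists>l. q l x \<noteq> 0)"
    and E_nontrivial: "\<exists>x::'e. x \<noteq> 0"
    \<comment> \<open>framework for FV(Omega)\<close>
    and omega_ne: "\<forall>m. \<omega> m \<noteq> {}"
    and nu_nonneg: "\<forall>j m w. 0 \<le> \<nu> j m w"
    and nu_pos: "\<forall>m. \<forall>w\<in>\<omega> m. \<exists>j. 0 < \<nu> j m w"
    and AP_sub: "AP \<subseteq> ext_fun \<Omega>" and AP_lin: "lin_subspace AP"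
    and domT_sub: "\<forall>m. domT m \<subseteq> ext_fun \<Omega>" and domT_lin: "\<forall>m. lin_subspace (domT m)"
    and T_lin: "\<forall>m. lin_on (domT m) (T m)"
    \<comment> \<open>FV(Omega) is a dom-space\<close>
    and FV_hausdorff: "\<forall>f\<in>FV_space AP domT \<omega> \<nu> T. f \<noteq> (\<lambda>_. 0) \<longrightarrow>
                          (\<exists>i. FV_sn \<omega> \<nu> T i f \<noteq> 0)"
    and FV_directed: "\<forall>i1 i2. \<exists>i C. \<forall>f\<in>FV_space AP domT \<omega> \<nu> T.
                          max (FV_sn \<omega> \<nu> T i1 f) (FV_sn \<omega> \<nu> T i2 f) \<le> C * FV_sn \<omega> \<nu> T i f"
    and FV_delta: "\<forall>x\<in>\<Omega>. delta (FV_space AP domT \<omega> \<nu> T) x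
                          \<in> dual_space (FV_sn \<omega> \<nu> T) (FV_space AP domT \<omega> \<nu> T)"
    \<comment> \<open>FV(Omega) is contained in C^ext(Omega)\<close>
    and FV_Cext: "FV_space AP domT \<omega> \<nu> T \<subseteq> Cext \<Omega> (UNIV :: unit set) (\<lambda>_. norm) UNIV"
    \<comment> \<open>delta belongs to C^ext(Omega, FV(Omega)'_kappa)\<close>
    and delta_Cext: "delta (FV_space AP domT \<omega> \<nu> T) \<in>
          Cext \<Omega> (kappa_sets (FV_sn \<omega> \<nu> T) (FV_space AP domT \<omega> \<nu> T)) kappa_sn
               (dual_space (FV_sn \<omega> \<nu> T) (FV_space AP domT \<omega> \<nu> T))"
  shows "\<forall>u \<in> eps_prod (FV_sn \<omega> \<nu> T) (FV_space AP domT \<omega> \<nu> T) sc q.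
           (\<lambda>x. u (delta (FV_space AP domT \<omega> \<nu> T) x)) \<in> Cext \<Omega> UNIV q UNIV"
proof
  fix u assume uE: "u \<in> eps_prod (FV_sn \<omega> \<nu> T) (FV_space AP domT \<omega> \<nu> T) sc q"
  define V where "V = FV_space AP domT \<omega> \<nu> T"
  define D where "D = dual_space (FV_sn \<omega> \<nu> T) V"
  have uc: "(\<forall>y\<in>D. \<forall>z\<in>D. \<forall>a b. u (\<lambda>f. a * y f + b * z f) = sc a (u y) + sc b (u z))
     \<and> sn_bounded (kappa_sets (FV_sn \<omega> \<nu> T) V) kappa_sn D UNIV q u"
    using uE unfolding V_def[symmetric] D_def[symmetric] eps_prod_def mem_Collect_eq .
  note ulin = conjunct1[OF uc] and ubd = conjunct2[OF uc]
  obtain g where gD: "\<forall>x\<in>closure \<Omega>. g x \<in> D" and geq: "\<forall>x\<in>\<Omega>. g x = delta V x"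
    and gc: "\<forall>z\<in>closure \<Omega>. \<forall>K\<in>kappa_sets (FV_sn \<omega> \<nu> T) V.
              ((\<lambda>x. kappa_sn K (g x - g z)) \<longlongrightarrow> 0) (at z within closure \<Omega>)"
  proof -
    have "\<exists>g. (\<forall>x\<in>closure \<Omega>. g x \<in> D) \<and> (\<forall>x\<in>\<Omega>. g x = delta V x) \<and>
        (\<forall>z\<in>closure \<Omega>. \<forall>K\<in>kappa_sets (FV_sn \<omega> \<nu> T) V.
              ((\<lambda>x. kappa_sn K (g x - g z)) \<longlongrightarrow> 0) (at z within closure \<Omega>))"
      using delta_Cext unfolding V_def[symmetric] D_def[symmetric] Cext_def mem_Collect_eq
      by (rule conjunct2)
    then show ?thesis using that by blast
  qed
  have one: "sc 1 v = v" and mone: "sc (-1) v = - v" for v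
  proof -
    interpret E: vector_space sc by (rule E_vs)
    show "sc 1 v = v" "sc (-1) v = - v" by simp_all
  qed
  have diff: "u (g x) - u (g z) = u (g x - g z)" if "x \<in> closure \<Omega>" "z \<in> closure \<Omega>" for x z
  proof -
    have "u (\<lambda>f. 1 * g x f + (-1) * g z f) = sc 1 (u (g x)) + sc (-1) (u (g z))"
      using ulin gD that by blast
    moreover have "(\<lambda>f. 1 * g x f + (-1) * g z f) = g x - g z" by (auto simp: fun_eq_iff)
    ultimately show ?thesis by (simp add: one mone)
  qed
  have nn: "\<forall>i. \<forall>v\<in>V. 0 \<le> FV_sn \<omega> \<nu> T i v"
    using FV_sn_nonneg[OF omega_ne nu_nonneg] unfolding V_def by blast
  have gdiffD: "g x - g z \<in> D" if "x \<in> closure \<Omega>" "z \<in> closure \<Omega>" for x z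
    using dual_diff[OF nn] gD that unfolding D_def by blast
  have q0: "0 \<le> q l v" for l v using E_sn unfolding seminorm_on_def by blast
  show "(\<lambda>x. u (delta V x)) \<in> Cext \<Omega> UNIV q UNIV"
    unfolding Cext_def mem_Collect_eq
  proof (intro conjI exI[of _ "\<lambda>x. u (g x)"])
    show "\<forall>x\<in>\<Omega>. u (delta V x) \<in> UNIV" by simp
    show "\<forall>x\<in>closure \<Omega>. u (g x) \<in> UNIV" by simp
    show "\<forall>x\<in>\<Omega>. u (g x) = u (delta V x)" using geq by simp
    show "\<forall>z\<in>closure \<Omega>. \<forall>l\<in>UNIV. ((\<lambda>x. q l (u (g x) - u (g z))) \<longlongrightarrow> 0) (at z within closure \<Omega>)"
    proof (intro ballI)
    fix z l assume z: "z \<in> closure \<Omega>" and "l \<in> (UNIV::'l set)"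
    obtain F C where F: "finite F" "F \<subseteq> kappa_sets (FV_sn \<omega> \<nu> T) V"
      and FC: "\<forall>v\<in>D. q l (u v) \<le> C * (\<Sum>K\<in>F. kappa_sn K v)"
    proof -
      have "\<exists>F C. finite F \<and> F \<subseteq> kappa_sets (FV_sn \<omega> \<nu> T) V \<and> (\<forall>v\<in>D. q l (u v) \<le> C * (\<Sum>K\<in>F. kappa_sn K v))"
        using ubd unfolding sn_bounded_def by (rule bspec) (rule UNIV_I)
      then show ?thesis using that by (elim exE conjE)
    qed
    have each: "((\<lambda>x. kappa_sn K (g x - g z)) \<longlongrightarrow> 0) (at z within closure \<Omega>)" if "K \<in> F" for K
      using gc z F(2) that by blast
    have lim0: "((\<lambda>x. \<Sum>K\<in>F. kappa_sn K (g x - g z)) \<longlongrightarrow> (\<Sum>K\<in>F. 0)) (at z within closure \<Omega>)"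
      by (rule tendsto_sum) (rule each)
    have lim: "((\<lambda>x. C * (\<Sum>K\<in>F. kappa_sn K (g x - g z))) \<longlongrightarrow> 0) (at z within closure \<Omega>)"
      using tendsto_mult_left[OF lim0, of C] by simp
    have ev: "eventually (\<lambda>x. q l (u (g x) - u (g z)) \<le> C * (\<Sum>K\<in>F. kappa_sn K (g x - g z)))
                (at z within closure \<Omega>)"
      unfolding eventually_at_filter
    proof (rule always_eventually, intro allI impI)
      fix x assume "x \<noteq> z" and x: "x \<in> closure \<Omega>"
      have "q l (u (g x) - u (g z)) = q l (u (g x - g z))" using diff[OF x z] by simp
      also have "\<dots> \<le> C * (\<Sum>K\<in>F. kappa_sn K (g x - g z))" using FC gdiffD[OF x z] by blast
      finally show "q l (u (g x) - u (g z)) \<le> C * (\<Sum>K\<in>F. kappa_sn K (g x - g z))" .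
    qed
    have ev0: "eventually (\<lambda>x. 0 \<le> q l (u (g x) - u (g z))) (at z within closure \<Omega>)"
      by (rule always_eventually) (simp add: q0)
    show "((\<lambda>x. q l (u (g x) - u (g z))) \<longlongrightarrow> 0) (at z within closure \<Omega>)"
      by (rule tendsto_sandwich[OF ev0 ev tendsto_const lim])
    qed
  qed
qed

end
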